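(* Let $D$ be a square-free integer, let $\mathbb{Z}[\sqrt{D}]$ denote the ring of integers of $\mathbb{Q}(\sqrt{D})$, and let $p$ be a prime integer which is irreducible but not prime in $\mathbb{Z}[\sqrt{D}]$. Let $z\in I_p(D)$ with $\lVert z\rVert=-p^2$. Then $\gcd(z_1,z_2D)=1$, where $z_1,z_2\in\mathbb{Z}$ are such that $z=z_1+z_2\sqrt{D}$ or $z=\frac{z_1+z_2\sqrt{D}}{2}$ (with $z_1,z_2$ odd, $D\equiv 1\pmod 4$).
   Context: $\mathbb{Z}[\sqrt{D}]=\{a+b\sqrt{D}:a,b\in\mathbb{Z}\}$ if $D\equiv 2,3 \pmod 4$ and $\{\frac{a+b\sqrt{D}}{2}:a,b\in\mathbb{Z},a\equiv b \pmod 2\}$ if $D\equiv 1\pmod 4$. $\lVert z\rVert=z\bar z$ is the norm. $I_p(D)$ is the set of all non-unit $z\in\mathbb{Z}[\sqrt{D}]$ such that $z\notin\langle p\rangle$ but there exists $m\notin\langle p\rangle$ with $zm\in\langle p\rangle$. *)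

theory Defs
  imports Complex_Main "HOL-Computational_Algebra.Squarefree"
begin

text \<open>Elements of Q(sqrt D) are represented as pairs (x,y) of rationals, meaning x + y sqrt D.\<close>

definition qmul :: "int \<Rightarrow> rat \<times> rat \<Rightarrow> rat \<times> rat \<Rightarrow> rat \<times> rat" where
  "qmul D z w = (fst z * fst w + of_int D * snd z * snd w, fst z * snd w + snd z * fst w)"

definition OD :: "int \<Rightarrow> (rat \<times> rat) set" where
  "OD D = (if D mod 4 = 1
           then {(of_int a / 2, of_int b / 2) | a b. a mod 2 = b mod 2}
           else {(of_int a, of_int b) | a b. True})"

definition qnorm :: "int \<Rightarrow> rat \<times> rat \<Rightarrow> rat" where
  "qnorm D z = (fst z)^2 - of_int D * (snd z)^2"

definition qunit :: "int \<Rightarrow> rat \<times> rat \<Rightarrow> bool" where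
  "qunit D z \<longleftrightarrow> z \<in> OD D \<and> (\<exists>w \<in> OD D. qmul D z w = (1, 0))"

definition qdvd :: "int \<Rightarrow> rat \<times> rat \<Rightarrow> rat \<times> rat \<Rightarrow> bool" where
  "qdvd D a b \<longleftrightarrow> (\<exists>c \<in> OD D. b = qmul D a c)"

definition pideal :: "int \<Rightarrow> int \<Rightarrow> (rat \<times> rat) set" where
  "pideal D p = {qmul D (of_int p, 0) m | m. m \<in> OD D}"

definition qirreducible :: "int \<Rightarrow> rat \<times> rat \<Rightarrow> bool" where
  "qirreducible D a \<longleftrightarrow> a \<in> OD D \<and> a \<noteq> (0, 0) \<and> \<not> qunit D a \<and>
     (\<forall>x \<in> OD D. \<forall>y \<in> OD D. a = qmul D x y \<longrightarrow> qunit D x \<or> qunit D y)"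

definition qprime :: "int \<Rightarrow> rat \<times> rat \<Rightarrow> bool" where
  "qprime D a \<longleftrightarrow> a \<in> OD D \<and> a \<noteq> (0, 0) \<and> \<not> qunit D a \<and>
     (\<forall>x \<in> OD D. \<forall>y \<in> OD D. qdvd D a (qmul D x y) \<longrightarrow> qdvd D a x \<or> qdvd D a y)"

definition Ip :: "int \<Rightarrow> int \<Rightarrow> (rat \<times> rat) set" where
  "Ip p D = {z \<in> OD D. \<not> qunit D z \<and> z \<notin> pideal D p \<and>
              (\<exists>m \<in> OD D. m \<notin> pideal D p \<and> qmul D z m \<in> pideal D p)}"

end

theory Submission
  imports Defs
begin

lemma core:
  fixes D p z1 z2 c :: int
  assumes sq: "squarefree D" and pp: "prime p"
    and eq: "z1^2 - D * z2^2 = - (c * p^2)"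
    and c: "c = 1 \<or> (c = 4 \<and> odd z1)"
    and notboth: "\<not> (p dvd z1 \<and> p dvd z2)"
  shows "gcd z1 (z2 * D) = 1"
proof (rule ccontr)
  assume ne: "gcd z1 (z2 * D) \<noteq> 1"
  have D0: "D \<noteq> 0" using sq by auto
  show False
  proof (cases "gcd z1 (z2 * D) = 0")
    case True
    then have "z1 = 0" "z2 = 0" using D0 by auto
    then show False using eq c pp by (auto simp: prime_int_iff)
  next
    case False
    have "\<not> is_unit (gcd z1 (z2 * D))" using ne
      by (metis gcd_ge_0_int zdvd1_eq abs_of_nonneg)
    then obtain q where q: "prime q" "q dvd gcd z1 (z2 * D)"
      using prime_divisor_exists[OF False] by blast
    have qz1: "q dvd z1" and qz2D: "q dvd z2 * D" using q(2) by auto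
    have "q dvd D * z2^2" using qz2D
      by (metis dvd_mult2 mult.commute mult.assoc power2_eq_square)
    moreover have "q dvd z1^2" using qz1 by (simp add: power2_eq_square)
    ultimately have "q dvd c * p^2"
      by (metis eq dvd_diff dvd_minus_iff)
    have "q dvd p^2"
    proof (cases "c = 1")
      case True then show ?thesis using \<open>q dvd c * p^2\<close> by simp
    next
      case False
      then have c4: "c = 4" "odd z1" using c by auto
      have "q \<noteq> 2" using c4 qz1 by auto
      have "\<not> q dvd 2^2"
      proof
        assume "q dvd 2^2"
        then have "q dvd 2" using q(1) prime_dvd_power by blast
        then have "q = 2" using q(1) using zdvd_imp_le[of q 2] prime_ge_2_int[of q] by force
        then show False using \<open>q \<noteq> 2\<close> by simp
      qed
      have "q dvd 2^2 * p^2" using \<open>q dvd c * p^2\<close> c4 by simp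
      then show ?thesis using \<open>\<not> q dvd 2^2\<close> q(1) prime_dvd_mult_iff by blast
    qed
    then have "q dvd p" using q(1) prime_dvd_power by blast
    then have qp: "q = p" using q(1) pp primes_dvd_imp_eq by blast
    then have "\<not> p dvd z2" using notboth qz1 by auto
    then have "p dvd D" using qz2D qp pp by (metis prime_dvd_mult_iff)
    have "coprime p z2" using \<open>\<not> p dvd z2\<close> pp by (simp add: prime_imp_coprime)
    then have cop: "coprime (p^2) (z2^2)" by simp
    have "p^2 dvd z1^2" using qz1 qp by simp
    moreover have "D * z2^2 = z1^2 + c * p^2" using eq by simp
    ultimately have "p^2 dvd D * z2^2" by simp
    then have "p^2 dvd D" using cop by (metis coprime_dvd_mult_left_iff)
    then have "p * p dvd D" by (simp add: power2_eq_square)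
    have "\<forall>x. x^2 dvd D \<longrightarrow> is_unit x" using sq unfolding squarefree_def .
    then have "is_unit p" using \<open>p^2 dvd D\<close> by blast
    then show False using pp not_prime_unit by blast
  qed
qed

theorem lemma3p4:
  fixes D p :: int and z :: "rat \<times> rat"
  assumes "squarefree D" and "D \<noteq> 1"
    and "prime p"
    and "qirreducible D (of_int p, 0)" and "\<not> qprime D (of_int p, 0)"
    and "z \<in> Ip p D"
    and "qnorm D z = - ((of_int p)^2)"
  shows "\<forall>z1 z2 :: int.
           (z = (of_int z1, of_int z2) \<or>
            (D mod 4 = 1 \<and> odd z1 \<and> odd z2 \<and> z = (of_int z1 / 2, of_int z2 / 2)))
           \<longrightarrow> gcd z1 (z2 * D) = 1"
proof (intro allI impI)
  fix z1 z2 :: int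
  assume h: "z = (of_int z1, of_int z2) \<or>
            (D mod 4 = 1 \<and> odd z1 \<and> odd z2 \<and> z = (of_int z1 / 2, of_int z2 / 2))"
  have nP: "z \<notin> pideal D p" using assms(6) by (simp add: Ip_def)
  show "gcd z1 (z2 * D) = 1"
  proof (cases "z = (of_int z1, of_int z2)")
    case True
    have "of_int (z1^2 - D * z2^2) = (of_int (- (1 * p^2)) :: rat)"
      using assms(7) True by (simp add: qnorm_def)
    then have eq: "z1^2 - D * z2^2 = - (1 * p^2)" by (simp only: of_int_eq_iff)
    have nb: "\<not> (p dvd z1 \<and> p dvd z2)"
    proof
      assume "p dvd z1 \<and> p dvd z2"
      then obtain a b where ab: "z1 = p * a" "z2 = p * b" by (auto elim!: dvdE)
      have m: "(of_int a, of_int b) \<in> OD D"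
      proof (cases "D mod 4 = 1")
        case True
        have "(of_int a :: rat, of_int b :: rat) = (of_int (2*a) / 2, of_int (2*b) / (2::rat))" by simp
        moreover have "(2*a) mod 2 = (2*b) mod 2" by simp
        ultimately have "(of_int a :: rat, of_int b :: rat) \<in> {(of_int a / 2, of_int b / 2) |a b. a mod 2 = b mod 2}"
          by (intro CollectI exI[of _ "2*a"] exI[of _ "2*b"]) simp
        then show ?thesis unfolding OD_def using True by simp
      next
        case False then show ?thesis unfolding OD_def by auto
      qed
      have "z = qmul D (of_int p, 0) (of_int a, of_int b)"
        using True ab by (simp add: qmul_def)
      then have "z \<in> pideal D p" using m unfolding pideal_def by blast
      then show False using nP by simp
    qed
    show ?thesis by (rule core[OF assms(1) assms(3) eq _ nb]) simp
  next
    case False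
    then have h2: "D mod 4 = 1" "odd z1" "odd z2" "z = (of_int z1 / 2, of_int z2 / 2)"
      using h by auto
    have "(of_int z1 / 2)^2 - of_int D * (of_int z2 / 2)^2 = - ((of_int p)^2 :: rat)"
      using assms(7) h2(4) by (simp add: qnorm_def)
    then have "of_int (z1^2 - D * z2^2) = (of_int (- (4 * p^2)) :: rat)"
      by (simp add: field_simps power2_eq_square)
    then have eq: "z1^2 - D * z2^2 = - (4 * p^2)" by (simp only: of_int_eq_iff)
    have nb: "\<not> (p dvd z1 \<and> p dvd z2)"
    proof
      assume "p dvd z1 \<and> p dvd z2"
      then obtain a b where ab: "z1 = p * a" "z2 = p * b" by (auto elim!: dvdE)
      have "odd a" "odd b" using ab h2 by auto
      then have m: "(of_int a / 2, of_int b / 2) \<in> OD D"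
        unfolding OD_def using h2(1) by (auto simp: odd_iff_mod_2_eq_one)
      have "z = qmul D (of_int p, 0) (of_int a / 2, of_int b / 2)"
        using h2(4) ab by (simp add: qmul_def)
      then have "z \<in> pideal D p" using m unfolding pideal_def by blast
      then show False using nP by simp
    qed
    show ?thesis by (rule core[OF assms(1) assms(3) eq _ nb]) (simp add: h2)
  qed
qed

end
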